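(* Let $\mathbb{F}$ be any field and $\mathcal{H}=(Q_0,Q_1,\beta)$ a directed tensor-labeled hypergraph following a single standard construction. Then $\delta(\mathcal{H})=0$. In particular $\dim_{\mathbb{F}}\mathcal{Z}(\mathcal{H})=|Q_1|-|V_{\mathrm{macro}}|+c_{\mathrm{macro}}$.
   Context: $Q_0,Q_1$ finite; $T(\mathbb{F}^{Q_0})=\bigoplus_{k\ge0}(\mathbb{F}^{Q_0})^{\otimes k}$, with $v\in Q_0$ identified with $\mathbf{1}_v$ and $1$ the unit of $T^0=\mathbb{F}$. A directed tensor-labeled hypergraph is $\mathcal{H}=(Q_0,Q_1,\beta)$ with $\beta:\mathbb{F}^{Q_1}\to T(\mathbb{F}^{Q_0})\times T(\mathbb{F}^{Q_0})$ linear, $\beta(\mathbf{1}_e)=(A_e,B_e)$. $\partial_\beta:\mathbb{F}^{Q_1}\to T(\mathbb{F}^{Q_0})$, $\mathbf{1}_e\mapsto B_e-A_e$; $\mathcal{Z}(\mathcal{H})=\mathrm{Ker}\,\partial_\beta$. $V_{\mathrm{macro}}=\{A_e\}\cup\{B_e\}$; $\mathcal{H}_{\mathrm{macro}}$ is the directed multigraph on $V_{\mathrm{macro}}$ with edges $Q_1$, $e:A_e\to B_e$; $c_{\mathrm{macro}}$ its number of weakly connected components; $B_{\mathrm{macro}}:\mathbb{F}^{Q_1}\to\mathbb{F}^{V_{\mathrm{macro}}}$, $\mathbf{1}_e\mapsto\mathbf{1}_{B_e}-\mathbf{1}_{A_e}$; $\hat\phi:\mathbb{F}^{V_{\mathrm{macro}}}\to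 T(\mathbb{F}^{Q_0})$, $\mathbf{1}_w\mapsto w$; $\delta(\mathcal{H})=\dim(\mathrm{Im}B_{\mathrm{macro}}\cap\mathrm{Ker}\hat\phi)$. $\mathrm{Sym}_k(m_1\otimes\cdots\otimes m_k)=\sum_{\sigma\in S_k}m_{\sigma(1)}\otimes\cdots\otimes m_{\sigma(k)}$. Standard constructions: (1) $\psi:Q_1\to2^{Q_0}$, $1\le|\psi(e)|\le2$, $\beta(e)=(2(v\otimes v),1)$ if $\psi(e)=\{v\}$, $(u\otimes v+v\otimes u,1)$ if $\psi(e)=\{u,v\}$, $u\neq v$; (2) $s,t:Q_1\to Q_0$, $\beta(e)=(s(e),t(e))$; (3) multiset $\{\!\{u_1,\dots,u_k\}\!\}$, $k\ge1$, $\beta(e)=(\mathrm{Sym}_k(u_1\otimes\cdots\otimes u_k),1)$; (4) tuple $(u_1,\dots,u_k)$, $k\ge1$, $\beta(e)=(u_1\otimes\cdots\otimes u_k,1)$; (5) multisets of sizes $p,q\ge1$, $\beta(e)=(\mathrm{Sym}_p(u_1\otimes\cdots\otimes u_p),\mathrm{Sym}_q(v_1\otimes\cdots\otimes v_q))$; (6) tuples, $\beta(e)=(u_1\otimes\cdots\otimes u_p,w_1\otimes\cdots\otimes w_q)$, $p,q\ge1$. "Single standard construction": all hyperedges given by the same one of (1)–(6). *)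

theory Defs
  imports Complex_Main "HOL-Combinatorics.Permutations" "HOL-Library.Function_Algebras"
begin

text \<open>Tensor algebra T(F^Q0): an element is a coefficient function on words
  (lists) over the vertex type; the word [v1,...,vk] stands for the basis tensor
  v1 \<otimes> ... \<otimes> vk, the empty word for the unit 1 of T^0.\<close>

type_synonym ('v,'a) tensor = "'v list \<Rightarrow> 'a"

definition tw :: "'v list \<Rightarrow> ('v,'a::field) tensor" where
  "tw ws = (\<lambda>w. if w = ws then 1 else 0)"

definition tunit :: "('v,'a::field) tensor" where
  "tunit = tw []"

definition Sym :: "'v list \<Rightarrow> ('v,'a::field) tensor" where
  "Sym us = (\<Sum>\<sigma> \<in> {\<sigma>. \<sigma> permutes {0..<length us}}.
               tw (map (\<lambda>i. us ! \<sigma> i) [0..<length us]))"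

text \<open>A hypergraph is (Q0,Q1,A,B) with beta(1_e) = (A e, B e).\<close>

definition vmacro :: "'e set \<Rightarrow> ('e \<Rightarrow> ('v,'a) tensor) \<Rightarrow> ('e \<Rightarrow> ('v,'a) tensor)
    \<Rightarrow> ('v,'a) tensor set" where
  "vmacro Q1 A B = A ` Q1 \<union> B ` Q1"

text \<open>F^X as functions vanishing outside X.\<close>
definition fspace :: "'x set \<Rightarrow> ('x \<Rightarrow> 'a::zero) set" where
  "fspace X = {f. \<forall>x. x \<notin> X \<longrightarrow> f x = 0}"

definition boundary :: "'e set \<Rightarrow> ('e \<Rightarrow> ('v,'a::field) tensor) \<Rightarrow> ('e \<Rightarrow> ('v,'a) tensor)
    \<Rightarrow> ('e \<Rightarrow> 'a) \<Rightarrow> ('v,'a) tensor" where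
  "boundary Q1 A B x = (\<lambda>w. \<Sum>e\<in>Q1. x e * (B e w - A e w))"

definition cycle_space :: "'e set \<Rightarrow> ('e \<Rightarrow> ('v,'a::field) tensor) \<Rightarrow> ('e \<Rightarrow> ('v,'a) tensor)
    \<Rightarrow> ('e \<Rightarrow> 'a) set" where
  "cycle_space Q1 A B = {x \<in> fspace Q1. boundary Q1 A B x = 0}"

definition Bmacro :: "'e set \<Rightarrow> ('e \<Rightarrow> ('v,'a::field) tensor) \<Rightarrow> ('e \<Rightarrow> ('v,'a) tensor)
    \<Rightarrow> ('e \<Rightarrow> 'a) \<Rightarrow> (('v,'a) tensor \<Rightarrow> 'a)" where
  "Bmacro Q1 A B x = (\<lambda>t. \<Sum>e\<in>Q1. x e * ((if t = B e then 1 else 0) - (if t = A e then 1 else 0)))"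

definition phihat :: "('v,'a::field) tensor set \<Rightarrow> (('v,'a) tensor \<Rightarrow> 'a) \<Rightarrow> ('v,'a) tensor" where
  "phihat V f = (\<lambda>w. \<Sum>t\<in>V. f t * t w)"

definition fdim :: "('x \<Rightarrow> 'a::field) set \<Rightarrow> nat" where
  "fdim S = vector_space.dim (\<lambda>c f x. c * f x) S"

lemma fun_vector_space: "vector_space (\<lambda>(c::'a::field) (f::'x \<Rightarrow> 'a) x. c * f x)"
  by unfold_locales (auto simp: algebra_simps fun_eq_iff)

definition delta :: "'e set \<Rightarrow> ('e \<Rightarrow> ('v,'a::field) tensor) \<Rightarrow> ('e \<Rightarrow> ('v,'a) tensor) \<Rightarrow> nat" where
  "delta Q1 A B = fdim (Bmacro Q1 A B ` fspace Q1
      \<inter> {f \<in> fspace (vmacro Q1 A B). phihat (vmacro Q1 A B) f = 0})"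

definition c_macro :: "'e set \<Rightarrow> ('e \<Rightarrow> ('v,'a) tensor) \<Rightarrow> ('e \<Rightarrow> ('v,'a) tensor) \<Rightarrow> nat" where
  "c_macro Q1 A B =
     (let R = {(A e, B e) | e. e \<in> Q1} in
      card (vmacro Q1 A B // ((R \<union> R\<inverse>)\<^sup>*)))"

definition std_construction :: "nat \<Rightarrow> 'v set \<Rightarrow> 'e set \<Rightarrow> ('e \<Rightarrow> ('v,'a::field) tensor)
    \<Rightarrow> ('e \<Rightarrow> ('v,'a) tensor) \<Rightarrow> bool" where
  "std_construction i Q0 Q1 A B =
    (if i = 1 then
       (\<exists>\<psi>. \<forall>e\<in>Q1. \<psi> e \<subseteq> Q0 \<and> 1 \<le> card (\<psi> e) \<and> card (\<psi> e) \<le> 2 \<and>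
          (\<forall>v. \<psi> e = {v} \<longrightarrow> A e = (\<lambda>w. 2 * tw [v,v] w) \<and> B e = tunit) \<and>
          (\<forall>u v. \<psi> e = {u,v} \<and> u \<noteq> v \<longrightarrow> A e = tw [u,v] + tw [v,u] \<and> B e = tunit))
     else if i = 2 then
       (\<exists>s t. \<forall>e\<in>Q1. s e \<in> Q0 \<and> t e \<in> Q0 \<and> A e = tw [s e] \<and> B e = tw [t e])
     else if i = 3 then
       (\<exists>U. \<forall>e\<in>Q1. U e \<noteq> {#} \<and> set_mset (U e) \<subseteq> Q0 \<and>
          (\<exists>us. mset us = U e \<and> A e = Sym us) \<and> B e = tunit)
     else if i = 4 then
       (\<exists>U. \<forall>e\<in>Q1. U e \<noteq> [] \<and> set (U e) \<subseteq> Q0 \<and> A e = tw (U e) \<and> B e = tunit)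
     else if i = 5 then
       (\<exists>U W. \<forall>e\<in>Q1. U e \<noteq> {#} \<and> set_mset (U e) \<subseteq> Q0 \<and>
          W e \<noteq> {#} \<and> set_mset (W e) \<subseteq> Q0 \<and>
          (\<exists>us. mset us = U e \<and> A e = Sym us) \<and> (\<exists>ws. mset ws = W e \<and> B e = Sym ws))
     else if i = 6 then
       (\<exists>U W. \<forall>e\<in>Q1. U e \<noteq> [] \<and> set (U e) \<subseteq> Q0 \<and> W e \<noteq> [] \<and> set (W e) \<subseteq> Q0 \<and>
          A e = tw (U e) \<and> B e = tw (W e))
     else False)"

definition single_standard_construction :: "'v set \<Rightarrow> 'e set \<Rightarrow> ('e \<Rightarrow> ('v,'a::field) tensor)
    \<Rightarrow> ('e \<Rightarrow> ('v,'a) tensor) \<Rightarrow> bool" where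
  "single_standard_construction Q0 Q1 A B = (\<exists>i\<in>{1..6}. std_construction i Q0 Q1 A B)"

end

theory Submission
  imports Defs
begin

lemma sum_fun_apply: "(\<Sum>i\<in>S. f i) x = (\<Sum>i\<in>S. f i x)"
  by (induction S rule: infinite_finite_induct) auto

lemma tw_nz: "tw l w \<noteq> (0::'a::field) \<Longrightarrow> w = l" by (auto simp: tw_def split: if_splits)

lemma Sym_alt: "Sym us = (\<Sum>\<sigma>\<in>{\<sigma>. \<sigma> permutes {..<length us}}. tw (permute_list \<sigma> us))"
  by (simp add: Sym_def permute_list_def atLeast0LessThan)

lemma Sym_nz: assumes "Sym us w \<noteq> (0::'a::field)" shows "mset w = mset us"
proof -
  have "(\<Sum>\<sigma>\<in>{\<sigma>. \<sigma> permutes {..<length us}}. tw (permute_list \<sigma> us) w) \<noteq> (0::'a)"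
    using assms by (simp add: Sym_alt sum_fun_apply)
  then obtain \<sigma> where "\<sigma> \<in> {\<sigma>. \<sigma> permutes {..<length us}}" "tw (permute_list \<sigma> us) w \<noteq> (0::'a)"
    by (rule sum.not_neutral_contains_not_neutral)
  then have "\<sigma> permutes {..<length us}" "w = permute_list \<sigma> us" using tw_nz by auto
  then show ?thesis by simp
qed

lemma Sym_mset: assumes "mset us = mset vs" shows "Sym us = Sym vs"
proof -
  obtain q where q: "q permutes {..<length vs}" "permute_list q vs = us"
    using mset_eq_permutation[OF assms] by blast
  have len: "length us = length vs" using assms mset_eq_length by blast
  have "Sym us = (\<Sum>\<sigma>\<in>{\<sigma>. \<sigma> permutes {..<length vs}}. tw (permute_list \<sigma> (permute_list q vs)))"
    by (simp add: Sym_alt len q(2))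
  also have "\<dots> = (\<Sum>\<sigma>\<in>{\<sigma>. \<sigma> permutes {..<length vs}}. tw (permute_list (q \<circ> \<sigma>) vs))"
    by (intro sum.cong refl) (simp add: permute_list_compose)
  also have "\<dots> = Sym vs"
    unfolding Sym_alt by (rule setum_permutations_compose_left[OF q(1), symmetric])
  finally show ?thesis .
qed

lemma Sym_Nil: "Sym [] = tunit"
  by (simp add: Sym_def tunit_def)

definition sep :: "('v,'a::field) tensor set \<Rightarrow> bool" where
  "sep V = (\<forall>t\<in>V. \<forall>t'\<in>V. \<forall>w. t w \<noteq> 0 \<longrightarrow> t' w \<noteq> 0 \<longrightarrow> t = t')"

lemma sep_tw: "(\<forall>t\<in>V. \<exists>l. t = tw l) \<Longrightarrow> sep V"
  unfolding sep_def by (metis tw_nz)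

lemma sep_Sym: "(\<forall>t\<in>V. \<exists>l. t = Sym l) \<Longrightarrow> sep V"
  unfolding sep_def by (metis Sym_nz Sym_mset)


interpretation FV: vector_space "\<lambda>(c::'a::field) (f::'x \<Rightarrow> 'a) x. c * f x"
  by (rule fun_vector_space)

lemma fdim_FV: "fdim S = FV.dim S" by (simp add: fdim_def)

lemma dim_zero_set: "FV.dim {0::'x \<Rightarrow> 'a::field} = 0"
proof -
  have "FV.span {0::'x \<Rightarrow> 'a} = FV.span {}" using FV.span_insert_0[of "{}"] by simp
  then show ?thesis by (metis FV.dim_eq_card_independent[OF FV.independent_empty] card.empty FV.span_eq_dim)
qed

lemma Bmacro_sum_set:
  assumes "finite C" "finite Q1"
  shows "(\<Sum>t\<in>C. Bmacro Q1 A B x t) =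
     (\<Sum>e\<in>Q1. x e * ((if B e \<in> C then 1 else 0) - (if A e \<in> C then 1 else 0)))"
proof -
  have "(\<Sum>t\<in>C. Bmacro Q1 A B x t) = (\<Sum>e\<in>Q1. \<Sum>t\<in>C. x e * ((if t = B e then 1 else 0) - (if t = A e then 1 else 0)))"
    unfolding Bmacro_def by (rule sum.swap)
  also have "\<dots> = (\<Sum>e\<in>Q1. x e * ((if B e \<in> C then 1 else 0) - (if A e \<in> C then 1 else 0)))"
    by (intro sum.cong refl) (simp add: sum_distrib_left[symmetric] sum_subtractf assms)
  finally show ?thesis .
qed

lemma Bmacro_sum_zero:
  assumes "finite Q1"
  shows "(\<Sum>t\<in>vmacro Q1 A B. Bmacro Q1 A B x t) = 0"
  using assms by (simp add: Bmacro_sum_set vmacro_def)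

lemma Bmacro_fspace: "Bmacro Q1 A B x \<in> fspace (vmacro Q1 A B)"
  unfolding fspace_def Bmacro_def vmacro_def by (auto intro!: sum.neutral)

lemma sep_kernel:
  assumes "finite V" "sep V" "phihat V f = 0" "t \<in> V" "t \<noteq> 0"
  shows "f t = 0"
proof -
  have "\<exists>w. t w \<noteq> 0"
  proof (rule ccontr)
    assume "\<not> (\<exists>w. t w \<noteq> 0)"
    then have "t = 0" by (simp add: fun_eq_iff)
    then show False using assms(5) by simp
  qed
  then obtain w where w: "t w \<noteq> 0" by blast
  have z: "t' w = 0" if "t' \<in> V - {t}" for t'
  proof (rule ccontr)
    assume "t' w \<noteq> 0"
    then have "t = t'" using assms(2,4) that w unfolding sep_def by blast
    then show False using that by simp
  qed
  have "0 = phihat V f w" using assms(3) by simp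
  also have "\<dots> = (\<Sum>t'\<in>V. f t' * t' w)" by (simp add: phihat_def)
  also have "\<dots> = f t * t w + (\<Sum>t'\<in>V - {t}. f t' * t' w)"
    by (rule sum.remove[OF assms(1,4)])
  also have "(\<Sum>t'\<in>V - {t}. f t' * t' w) = 0"
    by (rule sum.neutral) (simp add: z)
  finally show ?thesis using w by simp
qed

lemma inj_part:
  assumes "finite Q1" "sep (vmacro Q1 A B)" "phihat (vmacro Q1 A B) (Bmacro Q1 A B x) = 0"
  shows "Bmacro Q1 A B x = 0"
proof -
  let ?V = "vmacro Q1 A B" and ?f = "Bmacro Q1 A B x"
  have fV: "finite ?V" using assms(1) by (simp add: vmacro_def)
  have nz: "?f t = 0" if "t \<noteq> 0" for t
  proof (cases "t \<in> ?V")
    case True then show ?thesis using sep_kernel[OF fV assms(2,3) True that] by simp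
  next
    case False then show ?thesis using Bmacro_fspace[of Q1 A B x] by (simp add: fspace_def)
  qed
  have z: "?f 0 = 0"
  proof (cases "0 \<in> ?V")
    case True
    have "0 = (\<Sum>t\<in>?V. ?f t)" using Bmacro_sum_zero[OF assms(1)] by simp
    also have "\<dots> = ?f 0 + (\<Sum>t\<in>?V - {0}. ?f t)" using sum.remove[OF fV True] by blast
    also have "(\<Sum>t\<in>?V - {0}. ?f t) = 0" using nz by (intro sum.neutral) auto
    finally show ?thesis by (metis add.right_neutral)
  next
    case False then show ?thesis using Bmacro_fspace[of Q1 A B x] by (simp add: fspace_def)
  qed
  show ?thesis
  proof (rule ext)
    fix t show "?f t = 0 t" using nz z by (cases "t = 0") auto
  qed
qed

lemma boundary_eq:
  assumes "finite Q1"
  shows "boundary Q1 A B x = phihat (vmacro Q1 A B) (Bmacro Q1 A B x)"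
proof (rule ext)
  fix w
  let ?V = "vmacro Q1 A B"
  have fV: "finite ?V" using assms(1) by (simp add: vmacro_def)
  have "phihat ?V (Bmacro Q1 A B x) w =
     (\<Sum>t\<in>?V. \<Sum>e\<in>Q1. x e * ((if t = B e then 1 else 0) - (if t = A e then 1 else 0)) * t w)"
    by (simp add: phihat_def Bmacro_def sum_distrib_right)
  also have "\<dots> = (\<Sum>e\<in>Q1. \<Sum>t\<in>?V. x e * ((if t = B e then 1 else 0) - (if t = A e then 1 else 0)) * t w)"
    by (rule sum.swap)
  also have "\<dots> = (\<Sum>e\<in>Q1. x e * (B e w - A e w))"
  proof (intro sum.cong refl)
    fix e assume e: "e \<in> Q1"
    have "(\<Sum>t\<in>?V. x e * ((if t = B e then 1 else 0) - (if t = A e then 1 else 0)) * t w)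
        = x e * ((\<Sum>t\<in>?V. if t = B e then t w else 0) - (\<Sum>t\<in>?V. if t = A e then t w else 0))"
    proof -
      have "\<And>t. x e * ((if t = B e then 1 else 0) - (if t = A e then 1 else 0)) * t w
          = x e * ((if t = B e then t w else 0) - (if t = A e then t w else 0))" by simp
      then show ?thesis by (simp only: sum_distrib_left[symmetric] sum_subtractf[symmetric])
    qed
    also have "\<dots> = x e * (B e w - A e w)" using e fV by (simp add: vmacro_def)
    finally show "(\<Sum>t\<in>?V. x e * ((if t = B e then 1 else 0) - (if t = A e then 1 else 0)) * t w) = x e * (B e w - A e w)" .
  qed
  finally show "boundary Q1 A B x w = phihat ?V (Bmacro Q1 A B x) w" by (simp add: boundary_def)
qed


definition P1 :: "('v,'a::field) tensor \<Rightarrow> bool" where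
  "P1 t = (t = tunit \<or> (\<exists>v. t = (\<lambda>w. 2 * tw [v,v] w)) \<or> (\<exists>u v. u \<noteq> v \<and> t = tw [u,v] + tw [v,u]))"

lemma P1_cases[consumes 2, case_names u d p]:
  assumes "P1 (t::('v,'a::field) tensor)" "t w \<noteq> 0"
  obtains (u) "t = tunit" "w = []"
    | (d) v where "t = (\<lambda>w. 2 * tw [v,v] w)" "w = [v,v]"
    | (p) u v where "u \<noteq> v" "t = tw [u,v] + tw [v,u]" "w = [u,v] \<or> w = [v,u]"
proof -
  from assms(1) consider "t = tunit" | v where "t = (\<lambda>w. 2 * tw [v,v] w)"
    | u v where "u \<noteq> v" "t = tw [u,v] + tw [v,u]" unfolding P1_def by blast
  then show ?thesis
  proof cases
    case 1 then show ?thesis using assms(2) that(1) by (auto simp: tunit_def tw_def split: if_splits)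
  next
    case (2 v) then show ?thesis using assms(2) that(2) by (auto simp: tw_def split: if_splits)
  next
    case (3 u v)
    then have "w = [u,v] \<or> w = [v,u]" using assms(2) by (auto simp: tw_def split: if_splits)
    then show ?thesis using 3 that(3) by blast
  qed
qed

lemma pair_eq:
  assumes "(w = [u,v] \<or> w = [v,u])" "(w = [u',v'] \<or> w = [v',u'])"
  shows "(tw [u,v] + tw [v,u] :: ('v,'a::field) tensor) = tw [u',v'] + tw [v',u']"
proof -
  have "(u' = u \<and> v' = v) \<or> (u' = v \<and> v' = u)" using assms by auto
  then show ?thesis by (auto simp: add.commute)
qed

lemma P1_sep:
  assumes "P1 (t::('v,'a::field) tensor)" "P1 t'" "t w \<noteq> 0" "t' w \<noteq> 0"
  shows "t = t'"
  using assms(1,3)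
proof (cases rule: P1_cases)
  case u show ?thesis using assms(2,4) u by (cases rule: P1_cases) auto
next
  case (d v) show ?thesis using assms(2,4) d by (cases rule: P1_cases) auto
next
  case (p u v)
  show ?thesis using assms(2,4)
  proof (cases rule: P1_cases)
    case (p u' v') then show ?thesis using pair_eq \<open>t = tw [u,v] + tw [v,u]\<close> \<open>w = [u,v] \<or> w = [v,u]\<close> by metis
  qed (use p in auto)
qed

lemma sep_P1: "\<forall>t\<in>V. P1 t \<Longrightarrow> sep V"
  unfolding sep_def using P1_sep by blast

lemma sep_std:
  assumes "single_standard_construction Q0 Q1 (A::'e \<Rightarrow> ('v,'a::field) tensor) B"
  shows "sep (vmacro Q1 A B)"
proof -
  obtain i where i: "i \<in> {1..6}" "std_construction i Q0 Q1 A B"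
    using assms unfolding single_standard_construction_def by blast
  have "i = 1 \<or> i = 2 \<or> i = 3 \<or> i = 4 \<or> i = 5 \<or> i = 6" using i(1) by auto
  then show ?thesis
  proof (elim disjE)
    assume "i = 1"
    then have "std_construction 1 Q0 Q1 A B" using i(2) by simp
    then have "\<exists>\<psi>. \<forall>e\<in>Q1. \<psi> e \<subseteq> Q0 \<and> 1 \<le> card (\<psi> e) \<and> card (\<psi> e) \<le> 2 \<and>
          (\<forall>v. \<psi> e = {v} \<longrightarrow> A e = (\<lambda>w. 2 * tw [v,v] w) \<and> B e = tunit) \<and>
          (\<forall>u v. \<psi> e = {u,v} \<and> u \<noteq> v \<longrightarrow> A e = tw [u,v] + tw [v,u] \<and> B e = tunit)" unfolding std_construction_def by simp
    then obtain \<psi> where psi: "\<forall>e\<in>Q1. \<psi> e \<subseteq> Q0 \<and> 1 \<le> card (\<psi> e) \<and> card (\<psi> e) \<le> 2 \<and>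
          (\<forall>v. \<psi> e = {v} \<longrightarrow> A e = (\<lambda>w. 2 * tw [v,v] w) \<and> B e = tunit) \<and>
          (\<forall>u v. \<psi> e = {u,v} \<and> u \<noteq> v \<longrightarrow> A e = tw [u,v] + tw [v,u] \<and> B e = tunit)"
      by blast
    have "P1 (A e) \<and> P1 (B e)" if e: "e \<in> Q1" for e
    proof -
      have c: "card (\<psi> e) = 1 \<or> card (\<psi> e) = 2" using psi e by fastforce
      then show ?thesis
      proof
        assume "card (\<psi> e) = 1"
        then obtain v where "\<psi> e = {v}" by (meson card_1_singletonE)
        then show ?thesis using psi e unfolding P1_def by blast
      next
        assume "card (\<psi> e) = 2"
        then obtain u v where "\<psi> e = {u,v}" "u \<noteq> v" by (meson card_2_iff)
        then show ?thesis using psi e unfolding P1_def by blast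
      qed
    qed
    then show ?thesis by (intro sep_P1) (auto simp: vmacro_def)
  next
    assume "i = 2"
    then have "std_construction 2 Q0 Q1 A B" using i(2) by simp
    then have "\<exists>s t. \<forall>e\<in>Q1. s e \<in> Q0 \<and> t e \<in> Q0 \<and> A e = tw [s e] \<and> B e = tw [t e]" unfolding std_construction_def by simp
    then obtain s t where st: "\<forall>e\<in>Q1. s e \<in> Q0 \<and> t e \<in> Q0 \<and> A e = tw [s e] \<and> B e = tw [t e]"
      by blast
    show ?thesis
    proof (rule sep_tw, rule ballI)
      fix x assume "x \<in> vmacro Q1 A B"
      then obtain e where "e \<in> Q1" "x = A e \<or> x = B e" unfolding vmacro_def by blast
      then show "\<exists>l. x = tw l" using st by blast
    qed
  next
    assume "i = 3"
    then have "std_construction 3 Q0 Q1 A B" using i(2) by simp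
    then have "\<exists>U. \<forall>e\<in>Q1. U e \<noteq> {#} \<and> set_mset (U e) \<subseteq> Q0 \<and>
          (\<exists>us. mset us = U e \<and> A e = Sym us) \<and> B e = tunit" unfolding std_construction_def by simp
    then obtain U where U: "\<forall>e\<in>Q1. U e \<noteq> {#} \<and> set_mset (U e) \<subseteq> Q0 \<and>
          (\<exists>us. mset us = U e \<and> A e = Sym us) \<and> B e = tunit"
      by blast
    show ?thesis
    proof (rule sep_Sym, rule ballI)
      fix x assume "x \<in> vmacro Q1 A B"
      then obtain e where "e \<in> Q1" "x = A e \<or> x = B e" unfolding vmacro_def by blast
      then show "\<exists>l. x = Sym l" using U Sym_Nil by metis
    qed
  next
    assume "i = 4"
    then have "std_construction 4 Q0 Q1 A B" using i(2) by simp
    then have "\<exists>U. \<forall>e\<in>Q1. U e \<noteq> [] \<and> set (U e) \<subseteq> Q0 \<and> A e = tw (U e) \<and> B e = tunit" unfolding std_construction_def by simp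
    then obtain U where U: "\<forall>e\<in>Q1. U e \<noteq> [] \<and> set (U e) \<subseteq> Q0 \<and> A e = tw (U e) \<and> B e = tunit"
      by blast
    show ?thesis
    proof (rule sep_tw, rule ballI)
      fix x assume "x \<in> vmacro Q1 A B"
      then obtain e where "e \<in> Q1" "x = A e \<or> x = B e" unfolding vmacro_def by blast
      then show "\<exists>l. x = tw l" using U unfolding tunit_def by blast
    qed
  next
    assume "i = 5"
    then have "std_construction 5 Q0 Q1 A B" using i(2) by simp
    then have "\<exists>U W. \<forall>e\<in>Q1. U e \<noteq> {#} \<and> set_mset (U e) \<subseteq> Q0 \<and>
          W e \<noteq> {#} \<and> set_mset (W e) \<subseteq> Q0 \<and>
          (\<exists>us. mset us = U e \<and> A e = Sym us) \<and> (\<exists>ws. mset ws = W e \<and> B e = Sym ws)" unfolding std_construction_def by simp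
    then obtain U W where U: "\<forall>e\<in>Q1. U e \<noteq> {#} \<and> set_mset (U e) \<subseteq> Q0 \<and>
          W e \<noteq> {#} \<and> set_mset (W e) \<subseteq> Q0 \<and>
          (\<exists>us. mset us = U e \<and> A e = Sym us) \<and> (\<exists>ws. mset ws = W e \<and> B e = Sym ws)"
      by blast
    show ?thesis
    proof (rule sep_Sym, rule ballI)
      fix x assume "x \<in> vmacro Q1 A B"
      then obtain e where "e \<in> Q1" "x = A e \<or> x = B e" unfolding vmacro_def by blast
      then show "\<exists>l. x = Sym l" using U by metis
    qed
  next
    assume "i = 6"
    then have "std_construction 6 Q0 Q1 A B" using i(2) by simp
    then have "\<exists>U W. \<forall>e\<in>Q1. U e \<noteq> [] \<and> set (U e) \<subseteq> Q0 \<and> W e \<noteq> [] \<and> set (W e) \<subseteq> Q0 \<and>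
          A e = tw (U e) \<and> B e = tw (W e)" unfolding std_construction_def by simp
    then obtain U W where U: "\<forall>e\<in>Q1. U e \<noteq> [] \<and> set (U e) \<subseteq> Q0 \<and> W e \<noteq> [] \<and> set (W e) \<subseteq> Q0 \<and>
          A e = tw (U e) \<and> B e = tw (W e)"
      by blast
    show ?thesis
    proof (rule sep_tw, rule ballI)
      fix x assume "x \<in> vmacro Q1 A B"
      then obtain e where "e \<in> Q1" "x = A e \<or> x = B e" unfolding vmacro_def by blast
      then show "\<exists>l. x = tw l" using U by blast
    qed
  qed
qed

definition Er :: "'e set \<Rightarrow> ('e \<Rightarrow> 'x) \<Rightarrow> ('e \<Rightarrow> 'x) \<Rightarrow> ('x \<times> 'x) set" where
  "Er Q1 A B = (let R = {(A e, B e) | e. e \<in> Q1} in (R \<union> R\<inverse>)\<^sup>*)"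

definition Es :: "'e set \<Rightarrow> ('e \<Rightarrow> 'x) \<Rightarrow> ('e \<Rightarrow> 'x) \<Rightarrow> ('x \<times> 'x) set" where
  "Es Q1 A B = (let R = {(A e, B e) | e. e \<in> Q1} in (R \<union> R\<inverse>))"

lemma Er_Es: "Er Q A B = (Es Q A B)\<^sup>*" by (simp add: Er_def Es_def Let_def)

lemma sym_Es: "sym (Es Q A B)" by (simp add: Es_def Let_def sym_Un_converse)

lemma c_macro_Er: "c_macro Q1 A B = card (vmacro Q1 A B // Er Q1 A B)"
  by (simp add: c_macro_def Er_def Let_def)

lemma Es_insert: "Es (insert e F) A B = Es F A B \<union> {(A e, B e), (B e, A e)}"
  by (auto simp: Es_def Let_def)

lemma Er_cl: "(x,y) \<in> Er Q A B \<Longrightarrow> y = x \<or> y \<in> vmacro Q A B"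
  unfolding Er_Es
proof (induction rule: rtrancl_induct)
  case base then show ?case by simp
next
  case (step y z) then show ?case by (auto simp: Es_def vmacro_def Let_def)
qed

lemma equiv_Er: "equiv UNIV (Er Q A B)"
  unfolding equiv_def Er_Es using sym_rtrancl[OF sym_Es] trans_rtrancl by (auto simp: refl_on_def)

lemma Bmacro_add: "Bmacro Q A B (\<lambda>e. x e + y e) = (\<lambda>t. Bmacro Q A B x t + Bmacro Q A B y t)"
  unfolding Bmacro_def by (simp add: sum.distrib[symmetric] distrib_right)

lemma Bmacro_scale: "Bmacro Q A B (\<lambda>e. c * x e) = (\<lambda>t. c * Bmacro Q A B x t)"
  unfolding Bmacro_def by (simp add: sum_distrib_left mult.assoc)

lemma Bmacro_delta:
  assumes "finite F" "e \<in> F"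
  shows "Bmacro F A B (\<lambda>e'. if e' = e then k else 0) =
    (\<lambda>t. k * ((if t = B e then 1 else 0) - (if t = A e then 1 else 0)))"
proof -
  have "\<And>t e'. (if e' = e then k else 0) * ((if t = B e' then 1 else 0) - (if t = A e' then 1 else 0))
     = (if e' = e then k * ((if t = B e then 1 else 0) - (if t = A e then 1 else 0)) else 0)"
    by simp
  then show ?thesis using assms unfolding Bmacro_def by (intro ext) simp
qed

lemma path:
  fixes A B :: "'e \<Rightarrow> ('v,'a::field) tensor"
  assumes "finite F" "(a,c) \<in> Er F A B"
  shows "\<exists>y\<in>fspace F. Bmacro F A B y = (\<lambda>t. (if t = c then 1 else 0) - (if t = a then 1 else 0))"
  using assms(2) unfolding Er_Es
proof (induction rule: rtrancl_induct)
  case base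
  show ?case by (intro bexI[of _ "\<lambda>_. 0"]) (auto simp: fspace_def Bmacro_def)
next
  case (step b c)
  obtain y where y: "y \<in> fspace F" "Bmacro F A B y = (\<lambda>t. (if t = b then 1 else 0) - (if t = a then 1 else 0))"
    using step.IH by blast
  have "\<exists>e\<in>F. (A e = b \<and> B e = c) \<or> (A e = c \<and> B e = b)"
    using step.hyps(2) unfolding Es_def Let_def by blast
  then obtain e where e: "e \<in> F" "(A e = b \<and> B e = c) \<or> (A e = c \<and> B e = b)" by blast
  from e(2) show ?case
  proof
    assume h: "A e = b \<and> B e = c"
    let ?y = "\<lambda>e'. y e' + (if e' = e then 1 else 0)"
    have "?y \<in> fspace F" using y(1) e(1) by (auto simp: fspace_def)
    moreover have "Bmacro F A B ?y = (\<lambda>t. (if t = c then 1 else 0) - (if t = a then 1 else 0))"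
      unfolding Bmacro_add Bmacro_delta[OF assms(1) e(1)] y(2) using h
      by (intro ext) (simp add: algebra_simps)
    ultimately show ?case by blast
  next
    assume h: "A e = c \<and> B e = b"
    let ?y = "\<lambda>e'. y e' + (if e' = e then -1 else 0)"
    have "?y \<in> fspace F" using y(1) e(1) by (auto simp: fspace_def)
    moreover have "Bmacro F A B ?y = (\<lambda>t. (if t = c then 1 else 0) - (if t = a then 1 else 0))"
      unfolding Bmacro_add Bmacro_delta[OF assms(1) e(1)] y(2) using h
      by (intro ext) (simp add: algebra_simps)
    ultimately show ?case by blast
  qed
qed

lemma cut:
  assumes "finite F" "e \<notin> F" "Bmacro (insert e F) A B x = 0" "(A e, B e) \<notin> Er F A B"
  shows "x e = 0"
proof -
  let ?C = "Er F A B `` {A e}"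
  have fC: "finite ?C"
  proof (rule finite_subset)
    show "?C \<subseteq> insert (A e) (vmacro F A B)" using Er_cl by fastforce
    show "finite (insert (A e) (vmacro F A B))" using assms(1) by (simp add: vmacro_def)
  qed
  have eq: "(A e' \<in> ?C) = (B e' \<in> ?C)" if "e' \<in> F" for e'
  proof -
    have "(A e', B e') \<in> Er F A B" using that unfolding Er_Es Es_def Let_def by blast
    then show ?thesis using equiv_Er[of F A B] unfolding equiv_def by (meson Image_singleton_iff symD transD)
  qed
  have inA: "A e \<in> ?C" using equiv_Er[of F A B] unfolding equiv_def refl_on_def by blast
  have nB: "B e \<notin> ?C" using assms(4) by blast
  have "0 = (\<Sum>t\<in>?C. Bmacro (insert e F) A B x t)" using assms(3) by simp
  also have "\<dots> = (\<Sum>e'\<in>insert e F. x e' * ((if B e' \<in> ?C then 1 else 0) - (if A e' \<in> ?C then 1 else 0)))"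
    using fC assms(1) by (simp add: Bmacro_sum_set)
  also have "\<dots> = - x e + (\<Sum>e'\<in>F. x e' * ((if B e' \<in> ?C then 1 else 0) - (if A e' \<in> ?C then 1 else 0)))"
    using assms(1,2) inA nB by simp
  also have "(\<Sum>e'\<in>F. x e' * ((if B e' \<in> ?C then 1 else 0) - (if A e' \<in> ?C then 1 else 0))) = 0"
    using eq by (intro sum.neutral) auto
  finally show ?thesis by simp
qed


lemma fspace_span:
  fixes Q :: "'e set"
  assumes "finite Q"
  shows "fspace Q \<subseteq> FV.span ((\<lambda>e. (\<lambda>e'. if e' = e then 1 else (0::'a::field))) ` Q)"
proof
  fix x :: "'e \<Rightarrow> 'a" assume x: "x \<in> fspace Q"
  have "x = (\<Sum>e\<in>Q. (\<lambda>e'. x e * (if e' = e then 1 else 0)))"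
  proof (rule ext)
    fix e'
    have "(\<Sum>e\<in>Q. (\<lambda>e'. x e * (if e' = e then 1 else 0))) e' = (\<Sum>e\<in>Q. if e' = e then x e else 0)"
      by (simp add: sum_fun_apply if_distrib cong: if_cong)
    also have "\<dots> = x e'" using assms x by (simp add: fspace_def)
    finally show "x e' = (\<Sum>e\<in>Q. (\<lambda>e'. x e * (if e' = e then 1 else 0))) e'" by simp
  qed
  also have "\<dots> \<in> FV.span ((\<lambda>e. (\<lambda>e'. if e' = e then 1 else (0::'a::field))) ` Q)"
    by (intro FV.span_sum FV.span_scale FV.span_base) auto
  finally show "x \<in> FV.span ((\<lambda>e. (\<lambda>e'. if e' = e then 1 else (0::'a::field))) ` Q)" .
qed

lemma dim_step:
  fixes S :: "('e \<Rightarrow> 'a::field) set"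
  assumes "finite Q" "FV.subspace S" "S \<subseteq> fspace Q" "s0 \<in> S" "s0 e \<noteq> 0"
  shows "FV.dim S = FV.dim {x\<in>S. x e = 0} + 1"
proof -
  let ?K = "{x\<in>S. x e = 0}"
  have sK: "FV.subspace ?K" using assms(2) unfolding FV.subspace_def by auto
  obtain Bs where Bs: "Bs \<subseteq> ?K" "FV.independent Bs" "?K \<subseteq> FV.span Bs" "card Bs = FV.dim ?K"
    using FV.basis_exists by blast
  have fin: "finite Bs"
    using FV.independent_span_bound[OF finite_imageI[OF assms(1)] Bs(2)] fspace_span[OF assms(1)] Bs(1) assms(3)
    by blast
  have spanBs: "FV.span Bs \<subseteq> ?K" using FV.span_minimal[OF Bs(1) sK] .
  have ns: "s0 \<notin> FV.span Bs" using spanBs assms(5) by auto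
  have ind: "FV.independent (insert s0 Bs)" using FV.independent_insertI[OF ns Bs(2)] .
  have sub: "insert s0 Bs \<subseteq> S" using Bs(1) assms(4) by auto
  have spn: "S \<subseteq> FV.span (insert s0 Bs)"
  proof
    fix x assume x: "x \<in> S"
    let ?k = "x e / s0 e"
    have "x - (\<lambda>y. ?k * s0 y) \<in> S"
      by (rule FV.subspace_diff[OF assms(2) x FV.subspace_scale[OF assms(2) assms(4)]])
    moreover have "(x - (\<lambda>y. ?k * s0 y)) e = 0" using assms(5) by simp
    ultimately have "x - (\<lambda>y. ?k * s0 y) \<in> FV.span Bs" using Bs(3) by blast
    then show "x \<in> FV.span (insert s0 Bs)" unfolding FV.span_insert by blast
  qed
  have "FV.dim S = card (insert s0 Bs)" using FV.dim_unique[OF sub spn ind refl] .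
  also have "\<dots> = card Bs + 1" using fin ns FV.span_superset[of Bs] by (subst card_insert_disjoint) auto
  finally show ?thesis using Bs(4) by simp
qed

lemma quot_img: "A // r = (\<lambda>x. r``{x}) ` A" by (auto simp: quotient_def)

lemma add_vertex:
  assumes "finite V" "equiv UNIV r" "\<forall>x y. (x,y) \<in> r \<longrightarrow> y = x \<or> y \<in> V"
  shows "int (card (insert z V)) - int (card (insert z V // r)) = int (card V) - int (card (V // r))"
proof (cases "z \<in> V")
  case True then show ?thesis by (simp add: insert_absorb)
next
  case False
  have rf: "(x,x) \<in> r" for x using assms(2) unfolding equiv_def refl_on_def by blast
  have sy: "(x,y) \<in> r \<Longrightarrow> (y,x) \<in> r" for x y using assms(2) unfolding equiv_def by (meson symD)
  have cz: "r``{z} = {z}" using assms(3) False rf sy by blast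
  have q: "insert z V // r = insert {z} (V // r)" using cz by (simp add: quot_img)
  have nq: "{z} \<notin> V // r"
  proof
    assume "{z} \<in> V // r"
    then obtain v where "v \<in> V" "{z} = r``{v}" by (auto simp: quot_img)
    then show False using rf[of v] False by auto
  qed
  have fq: "finite (V // r)" using assms(1) by (simp add: quot_img)
  show ?thesis using q nq fq False assms(1) by simp
qed

lemma merge_char:
  fixes S :: "('x \<times> 'x) set"
  assumes "sym S"
  shows "(x,y) \<in> (S \<union> {(a,b),(b,a)})\<^sup>* \<longleftrightarrow>
    (x,y) \<in> S\<^sup>* \<or> ((x,a) \<in> S\<^sup>* \<and> (b,y) \<in> S\<^sup>*) \<or> ((x,b) \<in> S\<^sup>* \<and> (a,y) \<in> S\<^sup>*)"
proof
  have sy: "(x,y) \<in> S\<^sup>* \<Longrightarrow> (y,x) \<in> S\<^sup>*" for x y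
    using sym_rtrancl[OF assms] by (meson symD)
  have tr: "(x,y) \<in> S\<^sup>* \<Longrightarrow> (y,z) \<in> S\<^sup>* \<Longrightarrow> (x,z) \<in> S\<^sup>*" for x y z by (rule rtrancl_trans)
  assume "(x,y) \<in> (S \<union> {(a,b),(b,a)})\<^sup>*"
  then show "(x,y) \<in> S\<^sup>* \<or> ((x,a) \<in> S\<^sup>* \<and> (b,y) \<in> S\<^sup>*) \<or> ((x,b) \<in> S\<^sup>* \<and> (a,y) \<in> S\<^sup>*)"
  proof (induction rule: rtrancl_induct)
    case base then show ?case by simp
  next
    case (step y z)
    from step.hyps(2) consider (s) "(y,z) \<in> S" | (ab) "y = a" "z = b" | (ba) "y = b" "z = a" by blast
    then show ?case
    proof cases
      case s
      then have yz: "(y,z) \<in> S\<^sup>*" by blast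
      from step.IH show ?thesis
      proof (elim disjE conjE)
        assume "(x,y) \<in> S\<^sup>*" then show ?thesis using tr[OF _ yz] by blast
      next
        assume "(x,a) \<in> S\<^sup>*" "(b,y) \<in> S\<^sup>*" then show ?thesis using tr[OF _ yz] by blast
      next
        assume "(x,b) \<in> S\<^sup>*" "(a,y) \<in> S\<^sup>*" then show ?thesis using tr[OF _ yz] by blast
      qed
    next
      case ab
      from step.IH show ?thesis
      proof (elim disjE conjE)
        assume "(x,y) \<in> S\<^sup>*" then show ?thesis using ab by simp
      next
        assume "(x,a) \<in> S\<^sup>*" "(b,y) \<in> S\<^sup>*"
        then have "(x,b) \<in> S\<^sup>*" using ab tr[of x a b] sy[of b a] by simp
        then show ?thesis using ab by simp
      next
        assume "(x,b) \<in> S\<^sup>*" "(a,y) \<in> S\<^sup>*" then show ?thesis using ab by simp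
      qed
    next
      case ba
      from step.IH show ?thesis
      proof (elim disjE conjE)
        assume "(x,y) \<in> S\<^sup>*" then show ?thesis using ba by simp
      next
        assume "(x,a) \<in> S\<^sup>*" "(b,y) \<in> S\<^sup>*" then show ?thesis using ba by simp
      next
        assume "(x,b) \<in> S\<^sup>*" "(a,y) \<in> S\<^sup>*"
        then have "(x,a) \<in> S\<^sup>*" using ba tr[of x b a] sy[of a b] by simp
        then show ?thesis using ba by simp
      qed
    qed
  qed
next
  have sub: "S\<^sup>* \<subseteq> (S \<union> {(a,b),(b,a)})\<^sup>*" by (rule rtrancl_mono) blast
  have ab: "(a,b) \<in> (S \<union> {(a,b),(b,a)})\<^sup>*" "(b,a) \<in> (S \<union> {(a,b),(b,a)})\<^sup>*" by auto
  assume "(x,y) \<in> S\<^sup>* \<or> ((x,a) \<in> S\<^sup>* \<and> (b,y) \<in> S\<^sup>*) \<or> ((x,b) \<in> S\<^sup>* \<and> (a,y) \<in> S\<^sup>*)"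
  then show "(x,y) \<in> (S \<union> {(a,b),(b,a)})\<^sup>*"
  proof (elim disjE conjE)
    assume "(x,y) \<in> S\<^sup>*" then show ?thesis using sub by blast
  next
    assume "(x,a) \<in> S\<^sup>*" "(b,y) \<in> S\<^sup>*"
    then have "(x,a) \<in> (S \<union> {(a,b),(b,a)})\<^sup>*" "(b,y) \<in> (S \<union> {(a,b),(b,a)})\<^sup>*" using sub by blast+
    then show ?thesis using ab(1) by (meson rtrancl_trans)
  next
    assume "(x,b) \<in> S\<^sup>*" "(a,y) \<in> S\<^sup>*"
    then have "(x,b) \<in> (S \<union> {(a,b),(b,a)})\<^sup>*" "(a,y) \<in> (S \<union> {(a,b),(b,a)})\<^sup>*" using sub by blast+
    then show ?thesis using ab(2) by (meson rtrancl_trans)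
  qed
qed

lemma merge:
  assumes "sym S" "finite W" "a \<in> W" "b \<in> W" "(a,b) \<notin> S\<^sup>*"
  shows "card (W // (S \<union> {(a,b),(b,a)})\<^sup>*) + 1 = card (W // S\<^sup>*)"
proof -
  let ?r = "S\<^sup>*" and ?r' = "(S \<union> {(a,b),(b,a)})\<^sup>*"
  have eqv: "equiv UNIV ?r"
    unfolding equiv_def using sym_rtrancl[OF assms(1)] trans_rtrancl by (auto simp: refl_on_def)
  have sy: "(x,y) \<in> ?r \<Longrightarrow> (y,x) \<in> ?r" for x y using sym_rtrancl[OF assms(1)] by (meson symD)
  have tr: "(x,y) \<in> ?r \<Longrightarrow> (y,z) \<in> ?r \<Longrightarrow> (x,z) \<in> ?r" for x y z by (rule rtrancl_trans)
  have same: "(x,y) \<in> ?r \<longleftrightarrow> (z,y) \<in> ?r" if "(x,z) \<in> ?r" for x y z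
    using tr[OF that, of y] tr[OF sy[OF that], of y] by blast
  let ?U = "?r``{a} \<union> ?r``{b}"
  have ceq: "?r``{x} = ?r``{y} \<longleftrightarrow> (x,y) \<in> ?r" for x y
    using equiv_class_eq_iff[OF eqv] by auto
  have clsA: "?r'``{x} = ?U" if "(x,a) \<in> ?r" for x
  proof (rule set_eqI)
    fix y
    have xb: "(x,b) \<notin> ?r" using same[OF that, of b] assms(5) by blast
    show "y \<in> ?r'``{x} \<longleftrightarrow> y \<in> ?U"
      unfolding Image_singleton_iff merge_char[OF assms(1)] Un_iff
      using same[OF that, of y] that xb by blast
  qed
  have clsB: "?r'``{x} = ?U" if "(x,b) \<in> ?r" for x
  proof (rule set_eqI)
    fix y
    have xa: "(x,a) \<notin> ?r" using same[OF that, of a] assms(5) sy by blast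
    show "y \<in> ?r'``{x} \<longleftrightarrow> y \<in> ?U"
      unfolding Image_singleton_iff merge_char[OF assms(1)] Un_iff
      using same[OF that, of y] that xa by blast
  qed
  have clsO: "?r'``{x} = ?r``{x}" if "(x,a) \<notin> ?r" "(x,b) \<notin> ?r" for x
  proof (rule set_eqI)
    fix y
    show "y \<in> ?r'``{x} \<longleftrightarrow> y \<in> ?r``{x}"
      unfolding Image_singleton_iff merge_char[OF assms(1)] using that by blast
  qed
  have q: "W // ?r' = insert ?U ((W // ?r) - {?r``{a}, ?r``{b}})"
  proof
    show "W // ?r' \<subseteq> insert ?U ((W // ?r) - {?r``{a}, ?r``{b}})"
    proof
      fix C assume "C \<in> W // ?r'"
      then obtain w where w: "w \<in> W" "C = ?r'``{w}" by (auto simp: quot_img)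
      show "C \<in> insert ?U ((W // ?r) - {?r``{a}, ?r``{b}})"
      proof (cases "(w,a) \<in> ?r \<or> (w,b) \<in> ?r")
        case True then show ?thesis using w clsA clsB by blast
      next
        case False
        then have "C = ?r``{w}" "?r``{w} \<noteq> ?r``{a}" "?r``{w} \<noteq> ?r``{b}"
          using w clsO ceq by auto
        then show ?thesis using w(1) by (auto simp: quot_img)
      qed
    qed
  next
    show "insert ?U ((W // ?r) - {?r``{a}, ?r``{b}}) \<subseteq> W // ?r'"
    proof
      fix C assume C: "C \<in> insert ?U ((W // ?r) - {?r``{a}, ?r``{b}})"
      show "C \<in> W // ?r'"
      proof (cases "C = ?U")
        case True
        then have "C = ?r'``{a}" using clsA[of a] by simp
        then show ?thesis using assms(3) by (auto simp: quot_img)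
      next
        case False
        then obtain w where w: "w \<in> W" "C = ?r``{w}" "C \<noteq> ?r``{a}" "C \<noteq> ?r``{b}"
          using C by (auto simp: quot_img)
        then have "(w,a) \<notin> ?r" "(w,b) \<notin> ?r" using ceq by auto
        then have "?r'``{w} = C" using clsO w(2) by simp
        then show ?thesis using w(1) by (auto simp: quot_img)
      qed
    qed
  qed
  have nU: "?U \<notin> W // ?r"
  proof
    assume "?U \<in> W // ?r"
    then obtain w where "?U = ?r``{w}" by (auto simp: quot_img)
    then have "(w,a) \<in> ?r" "(w,b) \<in> ?r" by auto
    then show False using assms(5) sy tr by blast
  qed
  have fq: "finite (W // ?r)" using assms(2) by (simp add: quot_img)
  have ne: "?r``{a} \<noteq> ?r``{b}" using ceq assms(5) by blast
  have inq: "{?r``{a}, ?r``{b}} \<subseteq> W // ?r" using assms(3,4) by (auto simp: quot_img)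
  have c2: "card {?r``{a}, ?r``{b}} = 2" using ne by simp
  have le: "2 \<le> card (W // ?r)" using card_mono[OF fq inq] c2 by simp
  have "card (W // ?r') = card ((W // ?r) - {?r``{a}, ?r``{b}}) + 1"
    using q nU fq by simp
  also have "card ((W // ?r) - {?r``{a}, ?r``{b}}) = card (W // ?r) - 2"
    using card_Diff_subset[OF _ inq] c2 by simp
  finally show ?thesis using le by simp
qed

definition Zg :: "'e set \<Rightarrow> ('e \<Rightarrow> ('v,'a::field) tensor) \<Rightarrow> ('e \<Rightarrow> ('v,'a) tensor) \<Rightarrow> ('e \<Rightarrow> 'a) set" where
  "Zg Q A B = {x \<in> fspace Q. Bmacro Q A B x = 0}"

lemma Bmacro_plus: "Bmacro Q A B (x + y) = Bmacro Q A B x + Bmacro Q A B y"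
  by (rule ext) (simp add: Bmacro_def sum.distrib[symmetric] distrib_right)

lemma Bmacro_zero: "Bmacro Q A B 0 = 0"
  by (rule ext) (simp add: Bmacro_def)

lemma Zg_subspace: "FV.subspace (Zg Q A B)"
  unfolding FV.subspace_def
proof (intro conjI ballI allI)
  show "0 \<in> Zg Q A B" by (simp add: Zg_def fspace_def Bmacro_zero)
next
  fix x y assume "x \<in> Zg Q A B" "y \<in> Zg Q A B"
  then show "x + y \<in> Zg Q A B" by (simp add: Zg_def fspace_def Bmacro_plus)
next
  fix c x assume "x \<in> Zg Q A B"
  then show "(\<lambda>xa. c * x xa) \<in> Zg Q A B" unfolding Zg_def fspace_def by (auto simp: Bmacro_scale fun_eq_iff)
qed

lemma Bmacro_insert0:
  assumes "finite F" "e \<notin> F" "x e = 0"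
  shows "Bmacro (insert e F) A B x = Bmacro F A B x"
  using assms by (intro ext) (simp add: Bmacro_def)

lemma Zg_K:
  assumes "finite F" "e \<notin> F"
  shows "{x \<in> Zg (insert e F) A B. x e = 0} = Zg F A B"
proof
  show "{x \<in> Zg (insert e F) A B. x e = 0} \<subseteq> Zg F A B"
  proof
    fix x assume x: "x \<in> {x \<in> Zg (insert e F) A B. x e = 0}"
    then have "x \<in> fspace F" by (auto simp: Zg_def fspace_def)
    moreover have "Bmacro F A B x = 0" using x Bmacro_insert0[of F e x A B, OF assms] by (simp add: Zg_def)
    ultimately show "x \<in> Zg F A B" by (simp add: Zg_def)
  qed
next
  show "Zg F A B \<subseteq> {x \<in> Zg (insert e F) A B. x e = 0}"
  proof
    fix x assume x: "x \<in> Zg F A B"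
    then have xe: "x e = 0" using assms(2) by (simp add: Zg_def fspace_def)
    then show "x \<in> {x \<in> Zg (insert e F) A B. x e = 0}"
      using x Bmacro_insert0[of F e x A B, OF assms xe] by (simp add: Zg_def fspace_def)
  qed
qed

lemma Zg_fspace: "Zg Q A B \<subseteq> fspace Q" by (auto simp: Zg_def)

lemma graph_dim:
  fixes A B :: "'e \<Rightarrow> ('v,'a::field) tensor"
  assumes "finite Q"
  shows "int (FV.dim (Zg Q A B)) = int (card Q) - int (card (vmacro Q A B)) + int (card (vmacro Q A B // Er Q A B))"
  using assms
proof (induction Q rule: finite_induct)
  case empty
  have "Zg {} A B = {0}"
    by (auto simp: Zg_def fspace_def Bmacro_zero fun_eq_iff)
  then show ?case by (simp add: dim_zero_set vmacro_def)
next
  case (insert e F)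
  let ?a = "A e" and ?b = "B e" and ?V = "vmacro F A B"
  let ?W = "insert ?a (insert ?b ?V)"
  let ?r = "Er F A B"
  have VW: "vmacro (insert e F) A B = ?W" by (auto simp: vmacro_def)
  have fV: "finite ?V" using insert.hyps(1) by (simp add: vmacro_def)
  have eqv: "equiv UNIV ?r" by (rule equiv_Er)
  have cl: "\<forall>x y. (x,y) \<in> ?r \<longrightarrow> y = x \<or> y \<in> ?V" using Er_cl by blast
  have cl2: "\<forall>x y. (x,y) \<in> ?r \<longrightarrow> y = x \<or> y \<in> insert ?b ?V" using cl by blast
  have nW: "int (card ?W) - int (card (?W // ?r)) = int (card ?V) - int (card (?V // ?r))"
    using add_vertex[OF finite_insert[THEN iffD2, OF fV] eqv cl2, of ?a] add_vertex[OF fV eqv cl, of ?b]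
    by simp
  have Er_ins: "Er (insert e F) A B = (Es F A B \<union> {(?a,?b),(?b,?a)})\<^sup>*"
    by (simp add: Er_Es Es_insert)
  have cQ: "card (insert e F) = card F + 1" using insert.hyps by simp
  have K: "{x \<in> Zg (insert e F) A B. x e = 0} = Zg F A B" by (rule Zg_K[OF insert.hyps])
  show ?case
  proof (cases "(?a,?b) \<in> ?r")
    case True
    have sy: "(?b,?a) \<in> ?r" using True eqv unfolding equiv_def by (meson symD)
    have rr0: "(Es F A B \<union> {(?a,?b),(?b,?a)})\<^sup>* = (Es F A B)\<^sup>*"
    proof (rule equalityI)
      show "(Es F A B \<union> {(?a,?b),(?b,?a)})\<^sup>* \<subseteq> (Es F A B)\<^sup>*"
        by (rule rtrancl_subset_rtrancl) (use True sy in \<open>auto simp: Er_Es\<close>)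
      show "(Es F A B)\<^sup>* \<subseteq> (Es F A B \<union> {(?a,?b),(?b,?a)})\<^sup>*" by (rule rtrancl_mono) blast
    qed
    have rr: "Er (insert e F) A B = ?r" using Er_ins rr0 Er_Es by metis
    obtain y where y: "y \<in> fspace F" "Bmacro F A B y = (\<lambda>t. (if t = ?b then 1 else 0) - (if t = ?a then 1 else 0))"
      using path[OF insert.hyps(1) True] by blast
    let ?s = "\<lambda>e'. if e' = e then 1 else - y e'"
    have s_fs: "?s \<in> fspace (insert e F)" using y(1) by (auto simp: fspace_def)
    have s_B: "Bmacro (insert e F) A B ?s = 0"
    proof (rule ext)
      fix t
      have "Bmacro (insert e F) A B ?s t = ((if t = ?b then 1 else 0) - (if t = ?a then 1 else 0))
         + (\<Sum>e'\<in>F. - y e' * ((if t = B e' then 1 else 0) - (if t = A e' then 1 else 0)))"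
        unfolding Bmacro_def using insert.hyps
        by (simp add: sum.insert) (intro sum.cong refl, auto)
      also have "(\<Sum>e'\<in>F. - y e' * ((if t = B e' then 1 else 0) - (if t = A e' then 1 else 0)))
          = - Bmacro F A B y t"
        by (simp add: Bmacro_def sum_negf)
      finally show "Bmacro (insert e F) A B ?s t = 0 t" using y(2) by simp
    qed
    have s_Z: "?s \<in> Zg (insert e F) A B" using s_fs s_B by (simp add: Zg_def)
    have "FV.dim (Zg (insert e F) A B) = FV.dim (Zg F A B) + 1"
      using dim_step[OF finite_insert[THEN iffD2, OF insert.hyps(1)] Zg_subspace Zg_fspace s_Z, of e] K
      by simp
    then show ?thesis using insert.IH nW cQ VW rr by simp
  next
    case False
    have Zeq: "Zg (insert e F) A B = Zg F A B"
    proof -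
      have "\<forall>x\<in>Zg (insert e F) A B. x e = 0"
      proof
        fix x assume "x \<in> Zg (insert e F) A B"
        then have "Bmacro (insert e F) A B x = 0" by (simp add: Zg_def)
        then show "x e = 0" by (rule cut[OF insert.hyps _ False])
      qed
      then have "Zg (insert e F) A B = {x \<in> Zg (insert e F) A B. x e = 0}" by blast
      then show ?thesis using K by simp
    qed
    have mg: "card (?W // Er (insert e F) A B) + 1 = card (?W // ?r)"
      unfolding Er_ins using merge[OF sym_Es _ _ _ False[unfolded Er_Es], of ?W] fV by (simp add: Er_Es)
    show ?thesis using insert.IH nW cQ VW Zeq mg by simp
  qed
qed

theorem theorem4p3:
  fixes Q0 :: "'v set" and Q1 :: "'e set"
    and A B :: "'e \<Rightarrow> ('v, 'a::field) tensor"
  assumes "finite Q0" and "finite Q1"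
    and "single_standard_construction Q0 Q1 A B"
  shows "delta Q1 A B = 0 \<and>
         int (fdim (cycle_space Q1 A B)) =
           int (card Q1) - int (card (vmacro Q1 A B)) + int (c_macro Q1 A B)"
proof
  have sp: "sep (vmacro Q1 A B)" by (rule sep_std[OF assms(3)])
  let ?D = "Bmacro Q1 A B ` fspace Q1 \<inter> {f \<in> fspace (vmacro Q1 A B). phihat (vmacro Q1 A B) f = 0}"
  have D: "?D = {0}"
  proof
    show "?D \<subseteq> {0}"
    proof
      fix f assume "f \<in> ?D"
      then obtain x where "f = Bmacro Q1 A B x" "phihat (vmacro Q1 A B) f = 0" by blast
      then show "f \<in> {0}" using inj_part[OF assms(2) sp] by simp
    qed
  next
    have "(0::'e \<Rightarrow> 'a) \<in> fspace Q1" by (simp add: fspace_def)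
    moreover have "phihat (vmacro Q1 A B) 0 = 0" by (rule ext) (simp add: phihat_def)
    moreover have "(0::('v,'a) tensor \<Rightarrow> 'a) \<in> fspace (vmacro Q1 A B)" by (simp add: fspace_def)
    ultimately show "{0} \<subseteq> ?D" using Bmacro_zero[of Q1 A B, symmetric] by blast
  qed
  show "delta Q1 A B = 0" unfolding delta_def fdim_FV D by (rule dim_zero_set)
  have cs: "cycle_space Q1 A B = Zg Q1 A B"
    unfolding cycle_space_def Zg_def boundary_eq[OF assms(2)]
    using inj_part[OF assms(2) sp] by (auto simp: phihat_def)
  show "int (fdim (cycle_space Q1 A B)) =
           int (card Q1) - int (card (vmacro Q1 A B)) + int (c_macro Q1 A B)"
    unfolding cs fdim_FV c_macro_Er by (rule graph_dim[OF assms(2)])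
qed

end
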